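(* Let $K$ be a simplicial complex on the vertex set $[m]$ which has a minimal Taylor resolution. Then there exist a finite set $W$ and a sequence $\mathtt{N}$ of subsets of $W$ such that $K\cong K(\mathtt{N})$.
   Context: For a finite set $W$ and a sequence $\mathtt{N}=\{N_1,\ldots,N_r\}$ of subsets of $W$ (repetitions allowed), choose distinct new points $a_1,\ldots,a_r\notin W$, put $\widetilde{N}_i=N_i\sqcup\{a_i\}$ and $V=W\sqcup\{a_1,\ldots,a_r\}$; $K(\mathtt{N})$ is the simplicial complex on vertex set $V$ whose minimal non-faces are exactly $\widetilde{N}_1,\ldots,\widetilde{N}_r$. A minimal non-face of $K$ is a non-empty $N\subset[m]$ with $N\notin K$ and $N-\{i\}\in K$ for all $i\in N$. With $N_1,\ldots,N_r$ the minimal non-faces of $K$, $K$ has a minimal Taylor resolution iff the Taylor resolution of $\Bbbk[K]$ (free on $w_{i_1,\ldots,i_\ell}$, differential $d(w_{i_1,\ldots,i_\ell})=\sum_k(-1)^{k+1}v_{(N_{i_1}\cup\cdots\cup N_{i_\ell})-(N_{i_1}\cup\cdots\widehat{N_{i_k}}\cdots\cup N_{i_\ell})}w_{i_1,\ldots,\widehat{i_k},\ldots,i_\ell}$) satisfies $d\otimes\Bbbk=0$; equivalently $N_i\not\subset\bigcup_{k\ne i}N_k$ for all $i$. Ghost vertices of $K$ are allowed. *)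

theory Defs
  imports Main
begin

text \<open>A simplicial complex on vertex set V: a family of subsets of V containing the
empty set and closed under taking subsets (ghost vertices allowed).\<close>
definition simplicial_complex :: "'a set \<Rightarrow> 'a set set \<Rightarrow> bool" where
  "simplicial_complex V K \<longleftrightarrow> finite V \<and> K \<subseteq> Pow V \<and> {} \<in> K \<and>
     (\<forall>\<sigma> \<in> K. \<forall>\<tau>. \<tau> \<subseteq> \<sigma> \<longrightarrow> \<tau> \<in> K)"

definition min_non_face :: "'a set \<Rightarrow> 'a set set \<Rightarrow> 'a set \<Rightarrow> bool" where
  "min_non_face V K N \<longleftrightarrow> N \<noteq> {} \<and> N \<subseteq> V \<and> N \<notin> K \<and> (\<forall>i \<in> N. N - {i} \<in> K)"

definition min_non_faces :: "'a set \<Rightarrow> 'a set set \<Rightarrow> 'a set set" where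
  "min_non_faces V K = {N. min_non_face V K N}"

text \<open>K has a minimal Taylor resolution: d \<otimes> k = 0 for the Taylor resolution, i.e.
every coefficient monomial of the differential is non-constant: for every set S of
minimal non-faces (the index of a basis element w_S) and every N in S, the monomial
v indexed by (union S) - (union (S - {N})) is not 1, i.e. this set is nonempty.\<close>
definition has_minimal_Taylor_resolution :: "'a set \<Rightarrow> 'a set set \<Rightarrow> bool" where
  "has_minimal_Taylor_resolution V K \<longleftrightarrow>
     (\<forall>S \<subseteq> min_non_faces V K. \<forall>N \<in> S. \<Union>S - \<Union>(S - {N}) \<noteq> {})"

definition sc_iso :: "'a set \<Rightarrow> 'a set set \<Rightarrow> 'b set \<Rightarrow> 'b set set \<Rightarrow> bool" where
  "sc_iso V K V' K' \<longleftrightarrow> (\<exists>f. bij_betw f V V' \<and> (\<forall>\<sigma> \<subseteq> V. \<sigma> \<in> K \<longleftrightarrow> f ` \<sigma> \<in> K'))"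

text \<open>The complex K(N) for W and a sequence Ns = [N_1,...,N_r] of subsets of W.
New points a_i are realised as Inr i, points of W as Inl w.\<close>
definition KN_vertices :: "'b set \<Rightarrow> 'b set list \<Rightarrow> ('b + nat) set" where
  "KN_vertices W Ns = Inl ` W \<union> Inr ` {..<length Ns}"

definition KN_tilde :: "'b set list \<Rightarrow> nat \<Rightarrow> ('b + nat) set" where
  "KN_tilde Ns i = Inl ` (Ns ! i) \<union> {Inr i}"

definition KN :: "'b set \<Rightarrow> 'b set list \<Rightarrow> ('b + nat) set set" where
  "KN W Ns = {\<sigma>. \<sigma> \<subseteq> KN_vertices W Ns \<and> (\<forall>i < length Ns. \<not> KN_tilde Ns i \<subseteq> \<sigma>)}"

end

theory Submission
  imports Defs
begin

lemma my_inj_sub: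
  assumes "inj_on f C" "A \<subseteq> C" "B \<subseteq> C"
  shows "f ` A \<subseteq> f ` B \<longleftrightarrow> A \<subseteq> B"
  using assms unfolding inj_on_def by blast

lemma K_char_aux:
  assumes sc: "simplicial_complex V K"
  shows "finite \<sigma> \<Longrightarrow> \<sigma> \<subseteq> V \<Longrightarrow> \<sigma> \<notin> K \<Longrightarrow> \<exists>N \<in> min_non_faces V K. N \<subseteq> \<sigma>"
proof (induction "card \<sigma>" arbitrary: \<sigma> rule: less_induct)
  case less
  show ?case
  proof (cases "\<forall>i\<in>\<sigma>. \<sigma> - {i} \<in> K")
    case True
    have "\<sigma> \<noteq> {}" using less sc unfolding simplicial_complex_def by auto
    then have "\<sigma> \<in> min_non_faces V K" using True less unfolding min_non_faces_def min_non_face_def by auto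
    then show ?thesis by blast
  next
    case False
    then obtain i where i: "i \<in> \<sigma>" "\<sigma> - {i} \<notin> K" by blast
    have "card (\<sigma> - {i}) < card \<sigma>" using i less by (meson card_Diff1_less)
    from less(1)[OF this] less i show ?thesis by blast
  qed
qed

lemma K_char:
  assumes sc: "simplicial_complex V K" and s: "\<sigma> \<subseteq> V"
  shows "\<sigma> \<in> K \<longleftrightarrow> (\<forall>N \<in> min_non_faces V K. \<not> N \<subseteq> \<sigma>)"
proof
  assume "\<sigma> \<in> K"
  then show "\<forall>N \<in> min_non_faces V K. \<not> N \<subseteq> \<sigma>"
    using sc unfolding simplicial_complex_def min_non_faces_def min_non_face_def by blast
next
  assume "\<forall>N \<in> min_non_faces V K. \<not> N \<subseteq> \<sigma>"
  moreover have "finite \<sigma>" using sc s unfolding simplicial_complex_def by (meson finite_subset)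
  ultimately show "\<sigma> \<in> K" using K_char_aux[OF sc _ s] by blast
qed

lemma sc_iso_rev:
  assumes "bij_betw h V' V" and "\<forall>\<sigma>' \<subseteq> V'. \<sigma>' \<in> K' \<longleftrightarrow> h ` \<sigma>' \<in> K"
  shows "sc_iso V K V' K'"
  unfolding sc_iso_def
proof (intro exI conjI allI impI)
  let ?f = "the_inv_into V' h"
  show "bij_betw ?f V V'" using assms(1) by (rule bij_betw_the_inv_into)
  fix \<sigma> assume s: "\<sigma> \<subseteq> V"
  have sub: "?f ` \<sigma> \<subseteq> V'" using s assms(1)
    by (auto intro!: the_inv_into_into simp: bij_betw_def)
  have "h ` (?f ` \<sigma>) = \<sigma>" using s assms(1)
    by (simp add: image_comp bij_betw_def f_the_inv_into_f subset_iff cong: image_cong)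
  then show "\<sigma> \<in> K \<longleftrightarrow> ?f ` \<sigma> \<in> K'" using assms(2) sub by metis
qed

theorem proposition2p3:
  fixes m :: nat and K :: "nat set set"
  assumes "simplicial_complex {1..m} K"
    and "has_minimal_Taylor_resolution {1..m} K"
  shows "\<exists>(W :: nat set) (Ns :: nat set list). finite W \<and> (\<forall>N \<in> set Ns. N \<subseteq> W) \<and>
           sc_iso {1..m} K (KN_vertices W Ns) (KN W Ns)"
proof -
  define V where "V = {1..m::nat}"
  define M where "M = min_non_faces V K"
  have MV: "\<forall>N\<in>M. N \<subseteq> V" unfolding M_def min_non_faces_def min_non_face_def by auto
  have finM: "finite M"
    by (rule finite_subset[of M "Pow V"]) (use MV in \<open>auto simp: V_def\<close>)
  have priv: "\<forall>N\<in>M. \<exists>x. x \<in> N \<and> x \<notin> \<Union>(M - {N})"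
  proof
    fix N assume N: "N \<in> M"
    have "\<Union>M - \<Union>(M - {N}) \<noteq> {}"
      using assms(2) N unfolding has_minimal_Taylor_resolution_def M_def V_def by blast
    then obtain x where "x \<in> \<Union>M" "x \<notin> \<Union>(M - {N})" by blast
    then have "x \<in> N" by blast
    then show "\<exists>x. x \<in> N \<and> x \<notin> \<Union>(M - {N})" using \<open>x \<notin> \<Union>(M - {N})\<close> by blast
  qed
  define a where "a N = (SOME x. x \<in> N \<and> x \<notin> \<Union>(M - {N}))" for N
  have a: "\<And>N. N \<in> M \<Longrightarrow> a N \<in> N \<and> a N \<notin> \<Union>(M - {N})"
  proof -
    fix N assume "N \<in> M"
    then have "\<exists>x. x \<in> N \<and> x \<notin> \<Union>(M - {N})" using priv by blast
    then show "a N \<in> N \<and> a N \<notin> \<Union>(M - {N})" unfolding a_def by (rule someI_ex)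
  qed
  have ainj: "\<And>N N'. N \<in> M \<Longrightarrow> N' \<in> M \<Longrightarrow> a N = a N' \<Longrightarrow> N = N'"
  proof -
    fix N N' assume h: "N \<in> M" "N' \<in> M" "a N = a N'"
    show "N = N'"
    proof (rule ccontr)
      assume "N \<noteq> N'"
      then have "N \<in> M - {N'}" using h by simp
      moreover have "a N' \<in> N" using a[OF h(1)] h(3) by simp
      ultimately show False using a[OF h(2)] by blast
    qed
  qed
  obtain xs where xs: "set xs = M" "distinct xs" using finite_distinct_list[OF finM] by blast
  define A where "A = a ` M"
  define W where "W = V - A"
  define Ns where "Ns = map (\<lambda>N. N - {a N}) xs"
  define h where "h z = (case z of Inl w \<Rightarrow> w | Inr i \<Rightarrow> a (xs ! i))" for z :: "nat + nat"
  have len: "length Ns = length xs" unfolding Ns_def by simp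
  have xsM: "\<And>i. i < length xs \<Longrightarrow> xs ! i \<in> M" using xs by auto
  have hinj: "inj_on h (KN_vertices W Ns)"
  proof
    fix x y assume x: "x \<in> KN_vertices W Ns" and y: "y \<in> KN_vertices W Ns" and e: "h x = h y"
    show "x = y"
    proof (cases x; cases y)
      fix i j assume "x = Inr i" "y = Inr j"
      with x y e len have "i < length xs" "j < length xs" "a (xs!i) = a (xs!j)"
        unfolding KN_vertices_def h_def by auto
      then have "xs ! i = xs ! j" using ainj xsM by blast
      then have "i = j" using xs(2) \<open>i < length xs\<close> \<open>j < length xs\<close> by (simp add: nth_eq_iff_index_eq)
      then show "x = y" using \<open>x = Inr i\<close> \<open>y = Inr j\<close> by simp
    next
      fix i w assume "x = Inr i" "y = Inl w"
      with x y e len show "x = y" unfolding KN_vertices_def h_def W_def A_def using xsM by auto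
    next
      fix i w assume "x = Inl w" "y = Inr i"
      with x y e len show "x = y" unfolding KN_vertices_def h_def W_def A_def using xsM by auto
    qed (use e in \<open>auto simp: h_def\<close>)
  qed
  have himg: "h ` KN_vertices W Ns = V"
  proof
    show "h ` KN_vertices W Ns \<subseteq> V"
    proof
      fix v assume "v \<in> h ` KN_vertices W Ns"
      then obtain z where z: "z \<in> KN_vertices W Ns" "v = h z" by blast
      show "v \<in> V"
      proof (cases z)
        case (Inl w)
        then have "w \<in> W" using z(1) unfolding KN_vertices_def by auto
        moreover have "v = w" using z(2) Inl unfolding h_def by simp
        ultimately show ?thesis unfolding W_def by simp
      next
        case (Inr i)
        then have i: "i < length xs" using z len unfolding KN_vertices_def by auto
        have "a (xs!i) \<in> V" using a[OF xsM[OF i]] MV xsM[OF i] by blast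
        then show ?thesis using z Inr unfolding h_def by simp
      qed
    qed
    show "V \<subseteq> h ` KN_vertices W Ns"
    proof
      fix v assume v: "v \<in> V"
      show "v \<in> h ` KN_vertices W Ns"
      proof (cases "v \<in> A")
        case True
        then obtain N where N: "N \<in> M" "v = a N" unfolding A_def by blast
        then obtain i where "i < length xs" "xs ! i = N" using xs(1) by (metis in_set_conv_nth)
        then have "Inr i \<in> KN_vertices W Ns" "h (Inr i) = v"
          using N len unfolding KN_vertices_def h_def by simp_all
        then show ?thesis by (rule rev_image_eqI[OF _ sym])
      next
        case False
        then have "Inl v \<in> KN_vertices W Ns" "h (Inl v) = v"
          using v unfolding KN_vertices_def h_def W_def by simp_all
        then show ?thesis by (rule rev_image_eqI[OF _ sym])
      qed
    qed
  qed
  have bij: "bij_betw h (KN_vertices W Ns) V" using hinj himg by (simp add: bij_betw_def)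
  have tilde: "\<And>i. i < length xs \<Longrightarrow> h ` KN_tilde Ns i = xs ! i"
  proof -
    fix i assume i: "i < length xs"
    have "h ` KN_tilde Ns i = (xs!i - {a (xs!i)}) \<union> {a (xs!i)}"
      unfolding KN_tilde_def Ns_def h_def using i by (auto simp: image_image)
    also have "\<dots> = xs ! i" using a[OF xsM[OF i]] by auto
    finally show "h ` KN_tilde Ns i = xs ! i" .
  qed
  have tsub: "\<And>i. i < length xs \<Longrightarrow> KN_tilde Ns i \<subseteq> KN_vertices W Ns"
  proof -
    fix i assume i: "i < length xs"
    have "xs ! i \<subseteq> V" using MV xsM[OF i] by blast
    show "KN_tilde Ns i \<subseteq> KN_vertices W Ns"
    proof
      fix z assume "z \<in> KN_tilde Ns i"
      then consider w where "z = Inl w" "w \<in> xs!i" "w \<noteq> a (xs!i)" | "z = Inr i"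
        unfolding KN_tilde_def Ns_def using i by auto
      then show "z \<in> KN_vertices W Ns"
      proof cases
        case 1
        have "w \<notin> A"
        proof
          assume "w \<in> A"
          then obtain N' where N': "N' \<in> M" "w = a N'" unfolding A_def by blast
          then have "N' \<noteq> xs!i" using 1 by auto
          then show False using a[OF N'(1)] N' 1 xsM[OF i] by blast
        qed
        then show ?thesis using 1 \<open>xs ! i \<subseteq> V\<close> unfolding KN_vertices_def W_def by auto
      next
        case 2 then show ?thesis using i len unfolding KN_vertices_def by auto
      qed
    qed
  qed
  have iso: "\<forall>\<sigma>' \<subseteq> KN_vertices W Ns. \<sigma>' \<in> KN W Ns \<longleftrightarrow> h ` \<sigma>' \<in> K"
  proof (intro allI impI)
    fix \<sigma>' assume s: "\<sigma>' \<subseteq> KN_vertices W Ns"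
    have hs: "h ` \<sigma>' \<subseteq> V" using s himg by blast
    have eq: "\<And>i. i < length xs \<Longrightarrow> KN_tilde Ns i \<subseteq> \<sigma>' \<longleftrightarrow> xs ! i \<subseteq> h ` \<sigma>'"
    proof -
      fix i assume i: "i < length xs"
      show "KN_tilde Ns i \<subseteq> \<sigma>' \<longleftrightarrow> xs ! i \<subseteq> h ` \<sigma>'"
        using my_inj_sub[OF hinj tsub[OF i] s] tilde[OF i] by simp
    qed
    have "\<sigma>' \<in> KN W Ns \<longleftrightarrow> (\<forall>i < length xs. \<not> xs ! i \<subseteq> h ` \<sigma>')"
      unfolding KN_def using s eq len by auto
    also have "\<dots> \<longleftrightarrow> (\<forall>N \<in> M. \<not> N \<subseteq> h ` \<sigma>')" by (simp add: all_set_conv_all_nth xs(1)[symmetric])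
    also have "\<dots> \<longleftrightarrow> h ` \<sigma>' \<in> K" using K_char[OF assms(1)[folded V_def] hs] M_def by simp
    finally show "\<sigma>' \<in> KN W Ns \<longleftrightarrow> h ` \<sigma>' \<in> K" .
  qed
  have "finite W" unfolding W_def V_def by simp
  moreover have "\<forall>N \<in> set Ns. N \<subseteq> W"
  proof
    fix N0 assume "N0 \<in> set Ns"
    then obtain N where N: "N \<in> M" "N0 = N - {a N}" unfolding Ns_def using xs(1) by auto
    show "N0 \<subseteq> W"
    proof
      fix w assume w: "w \<in> N0"
      have "w \<notin> A"
      proof
        assume "w \<in> A"
        then obtain N' where N': "N' \<in> M" "w = a N'" unfolding A_def by blast
        then have "N' \<noteq> N" using w N by auto
        then show False using a[OF N'(1)] N' w N by blast
      qed
      then show "w \<in> W" using w N MV unfolding W_def by blast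
    qed
  qed
  moreover have "sc_iso V K (KN_vertices W Ns) (KN W Ns)" using sc_iso_rev[OF bij iso] .
  ultimately show ?thesis unfolding V_def by blast
qed

end
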